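(* Let $\psi:\mathbb R^n\to\mathbb R$ be convex, $x_0\in\mathbb R^n$ with $\psi(x_0)=0$ and $0\in\partial\psi(x_0)$, $t>0$, and let $A$ be a positive definite symmetric matrix such that $S=S(x_0,0,t)$ satisfies $\{x:|x|_A\le1\}\subset S\subset\{x:|x|_A\le n\}$. Then there exist a constant $c>0$ depending only on $n$ and a set $V\subset\partial\psi(S)$ such that $$|V|\ge c\,\frac{t^n}{|S|},\qquad \Sigma:=\partial\psi^*(V)\subset S,$$ and for all $q\in V$ and $y_0\in\partial\psi^*(q)$, $$\psi(y)-\psi(y_0)\ge\frac{t}{8n^2}|y-y_0|_A^2+q\cdot(y-y_0)\qquad\text{for all } y\in\{x:|x|_A\le2n\}.$$ (In particular $\partial\psi^*(q)=\{y_0\}$ for every $q\in V$.)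
   Context: $|x|_A=\sqrt{x^*Ax}$. Sections: $S(x_0,p_0,t)=\{x:\psi(x)\le\psi(x_0)+p_0\cdot(x-x_0)+t\}$. $\psi^*$ is the Legendre transform and $\partial\psi^*(V)=\bigcup_{q\in V}\partial\psi^*(q)$; $|\cdot|$ is Lebesgue measure. *)

theory Defs
  imports "HOL-Analysis.Analysis"
begin

definition normA :: "real^'n^'n \<Rightarrow> real^'n \<Rightarrow> real" where
  "normA A x = sqrt (x \<bullet> (A *v x))"

definition pos_def_sym :: "real^'n^'n \<Rightarrow> bool" where
  "pos_def_sym A \<longleftrightarrow> transpose A = A \<and> (\<forall>x. x \<noteq> 0 \<longrightarrow> x \<bullet> (A *v x) > 0)"

definition sect :: "(real^'n \<Rightarrow> real) \<Rightarrow> real^'n \<Rightarrow> real^'n \<Rightarrow> real \<Rightarrow> (real^'n) set" where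
  "sect \<psi> x0 p0 t = {x. \<psi> x \<le> \<psi> x0 + p0 \<bullet> (x - x0) + t}"

definition subdiff :: "(real^'n \<Rightarrow> real) \<Rightarrow> real^'n \<Rightarrow> (real^'n) set" where
  "subdiff \<psi> x = {p. \<forall>y. \<psi> y \<ge> \<psi> x + p \<bullet> (y - x)}"

definition subdiff_set :: "(real^'n \<Rightarrow> real) \<Rightarrow> (real^'n) set \<Rightarrow> (real^'n) set" where
  "subdiff_set \<psi> E = (\<Union>x\<in>E. subdiff \<psi> x)"

definition legendre :: "(real^'n \<Rightarrow> real) \<Rightarrow> real^'n \<Rightarrow> ereal" where
  "legendre \<psi> q = (SUP x. ereal (q \<bullet> x - \<psi> x))"

definition subdiff_ereal :: "(real^'n \<Rightarrow> ereal) \<Rightarrow> real^'n \<Rightarrow> (real^'n) set" where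
  "subdiff_ereal f q = {y. \<bar>f q\<bar> \<noteq> \<infinity> \<and> (\<forall>q'. f q' \<ge> f q + ereal (y \<bullet> (q' - q)))}"

definition subdiff_ereal_set :: "(real^'n \<Rightarrow> ereal) \<Rightarrow> (real^'n) set \<Rightarrow> (real^'n) set" where
  "subdiff_ereal_set f V = (\<Union>q\<in>V. subdiff_ereal f q)"

end

theory Submission
  imports Defs
begin


datatype 'a wo = WO (unWO: 'a)

lemma UNIV_wo: "(UNIV :: 'a wo set) = range WO"
  by (metis surj_def wo.exhaust)

instance wo :: (finite) finite
  by standard (simp add: UNIV_wo)

definition wo_enc :: "'a::finite wo \<Rightarrow> nat" where
  "wo_enc = (SOME f. inj f)"

lemma inj_wo_enc: "inj wo_enc"
proof -
  obtain f :: "'a wo \<Rightarrow> nat" and n where "inj_on f UNIV"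
    using finite_imp_inj_to_nat_seg[of "UNIV :: 'a wo set"] by blast
  then show ?thesis unfolding wo_enc_def by (metis someI_ex)
qed

instantiation wo :: (finite) linorder
begin
definition less_eq_wo :: "'a wo \<Rightarrow> 'a wo \<Rightarrow> bool" where "less_eq_wo x y \<longleftrightarrow> wo_enc x \<le> wo_enc y"
definition less_wo :: "'a wo \<Rightarrow> 'a wo \<Rightarrow> bool" where "less_wo x y \<longleftrightarrow> wo_enc x < wo_enc y"
instance
proof
  fix x y z :: "'a wo"
  show "x \<le> x" by (simp add: less_eq_wo_def)
  show "(x < y) = (x \<le> y \<and> \<not> y \<le> x)" by (auto simp: less_eq_wo_def less_wo_def)
  show "x \<le> y \<Longrightarrow> y \<le> z \<Longrightarrow> x \<le> z" by (auto simp: less_eq_wo_def)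
  show "x \<le> y \<Longrightarrow> y \<le> x \<Longrightarrow> x = y" using inj_wo_enc by (auto simp: less_eq_wo_def dest: injD)
  show "x \<le> y \<or> y \<le> x" by (auto simp: less_eq_wo_def)
qed
end

instance wo :: (finite) wellorder
proof
  fix P :: "'a wo \<Rightarrow> bool" and a
  assume H: "\<And>x. (\<And>y. y < x \<Longrightarrow> P y) \<Longrightarrow> P x"
  have "\<forall>x. wo_enc x = m \<longrightarrow> P x" for m
    by (induction m rule: less_induct) (metis H less_wo_def)
  then show "P a" by blast
qed




lemma emeasure_lborel_box_cart:
  fixes l u :: "real^'n"
  assumes "\<And>i. l$i \<le> u$i"
  shows "emeasure lborel (box l u) = ennreal (\<Prod>i\<in>UNIV. u$i - l$i)"
proof -
  have "\<forall>b\<in>Basis. l \<bullet> b \<le> u \<bullet> b"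
    using assms by (auto simp: Basis_vec_def inner_axis)
  then have "emeasure lborel (box l u) = ennreal (\<Prod>b\<in>Basis. (u - l) \<bullet> b)"
    by (simp add: emeasure_lborel_box_eq)
  also have "(\<Prod>b\<in>Basis. (u - l) \<bullet> b) = (\<Prod>i\<in>UNIV. u$i - l$i)"
    by (simp add: Basis_vec_def cart_eq_inner_axis axis_eq_axis prod.UNION_disjoint inner_diff_left)
  finally show ?thesis .
qed

definition Rw :: "real^'n \<Rightarrow> real^('n wo)" where "Rw x = (\<chi> j. x $ unWO j)"
definition Rv :: "real^('n wo) \<Rightarrow> real^'n" where "Rv y = (\<chi> i. y $ WO i)"

lemma Rv_Rw[simp]: "Rv (Rw x) = x" by (simp add: Rv_def Rw_def vec_eq_iff)
lemma Rw_Rv[simp]: "Rw (Rv y) = y" by (simp add: Rv_def Rw_def vec_eq_iff)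
lemma linear_Rw: "linear Rw"
  by (auto simp: linear_iff Rw_def vec_eq_iff)
lemma linear_Rv: "linear Rv"
  by (auto simp: linear_iff Rv_def vec_eq_iff)

lemma inj_WO: "inj WO" by (simp add: inj_def)
lemma sum_wo: "(\<Sum>j\<in>UNIV. f j) = (\<Sum>i\<in>UNIV. f (WO i))"
proof -
  have "(\<Sum>j\<in>UNIV. f j) = (\<Sum>j\<in>WO ` UNIV. f j)" by (simp only: UNIV_wo)
  also have "\<dots> = (\<Sum>i\<in>UNIV. f (WO i))" by (rule sum.reindex_cong[OF inj_WO refl refl])
  finally show ?thesis .
qed
lemma prod_wo: "(\<Prod>j\<in>UNIV. f j) = (\<Prod>i\<in>UNIV. f (WO i))"
proof -
  have "(\<Prod>j\<in>UNIV. f j) = (\<Prod>j\<in>WO ` UNIV. f j)" by (simp only: UNIV_wo)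
  also have "\<dots> = (\<Prod>i\<in>UNIV. f (WO i))" by (rule prod.reindex_cong[OF inj_WO refl refl])
  finally show ?thesis .
qed

lemma inner_Rw: "Rw x \<bullet> Rw y = x \<bullet> y"
  unfolding inner_vec_def Rw_def by (subst sum_wo) simp
lemma inner_Rv: "Rv x \<bullet> Rv y = x \<bullet> y"
  by (metis Rw_Rv inner_Rw)

lemma distr_Rv: "distr (lborel :: (real^('n wo)) measure) borel Rv = (lborel :: (real^'n) measure)"
proof (rule lborel_eqI[symmetric])
  have meas: "Rv \<in> borel_measurable (lborel :: (real^('n wo)) measure)"
    unfolding measurable_lborel2
    by (rule borel_measurable_continuous_onI, rule linear_continuous_on) (use linear_Rv linear_conv_bounded_linear in auto)
  fix l u :: "real^'n"
  assume lu: "\<And>b. b \<in> Basis \<Longrightarrow> l \<bullet> b \<le> u \<bullet> b"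
  then have lu': "\<And>i. l$i \<le> u$i"
    using lu[of "axis i 1" for i] by (auto simp: inner_axis axis_in_Basis_iff)
  have pre: "Rv -` box l u = box (Rw l) (Rw u)"
  proof (rule set_eqI)
    fix x :: "real^('n wo)"
    have "(\<forall>i. l $ i < x $ WO i \<and> x $ WO i < u $ i) \<longleftrightarrow>
          (\<forall>j. l $ unWO j < x $ j \<and> x $ j < u $ unWO j)"
    proof
      assume H: "\<forall>i. l $ i < x $ WO i \<and> x $ WO i < u $ i"
      show "\<forall>j. l $ unWO j < x $ j \<and> x $ j < u $ unWO j"
      proof
        fix j show "l $ unWO j < x $ j \<and> x $ j < u $ unWO j"
          using H[rule_format, of "unWO j"] by simp
      qed
    next
      assume H: "\<forall>j. l $ unWO j < x $ j \<and> x $ j < u $ unWO j"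
      show "\<forall>i. l $ i < x $ WO i \<and> x $ WO i < u $ i"
      proof
        fix i show "l $ i < x $ WO i \<and> x $ WO i < u $ i"
          using H[rule_format, of "WO i"] by simp
      qed
    qed
    then show "x \<in> Rv -` box l u \<longleftrightarrow> x \<in> box (Rw l) (Rw u)"
      by (simp add: mem_box_cart Rv_def Rw_def)
  qed
  have "emeasure (distr lborel borel Rv) (box l u) = emeasure lborel (box (Rw l) (Rw u))"
    using emeasure_distr[OF meas, of "box l u"] by (simp only: space_lborel space_borel Int_UNIV_right pre) (simp add: borel_open)
  also have "\<dots> = ennreal (\<Prod>j\<in>UNIV. Rw u $ j - Rw l $ j)"
    by (rule emeasure_lborel_box_cart) (simp add: Rw_def lu')
  also have "(\<Prod>j\<in>UNIV. Rw u $ j - Rw l $ j) = (\<Prod>i\<in>UNIV. u $ i - l $ i)"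
    by (subst prod_wo) (simp add: Rw_def)
  also have "\<dots> = (\<Prod>b\<in>Basis. (u - l) \<bullet> b)"
    by (simp add: Basis_vec_def cart_eq_inner_axis axis_eq_axis prod.UNION_disjoint inner_diff_left)
  finally show "emeasure (distr lborel borel Rv) (box l u) = (\<Prod>b\<in>Basis. (u - l) \<bullet> b)"
    by simp
qed (rule sets_distr)

lemma Rv_meas: "Rv \<in> borel_measurable (borel :: (real^('n::finite wo)) measure)"
  by (rule borel_measurable_continuous_onI, rule linear_continuous_on) (use linear_Rv linear_conv_bounded_linear in auto)

lemma Rw_image_eq: "Rw ` X = Rv -` X"
proof (rule set_eqI)
  fix x show "x \<in> Rw ` X \<longleftrightarrow> x \<in> Rv -` X"
  proof
    assume "x \<in> Rw ` X" then obtain y where "y \<in> X" "x = Rw y" by blast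
    then show "x \<in> Rv -` X" by simp
  next
    assume "x \<in> Rv -` X" then have "Rv x \<in> X" by simp
    then have "Rw (Rv x) \<in> Rw ` X" by (rule imageI)
    then show "x \<in> Rw ` X" by simp
  qed
qed

lemma Rw_image_borel: "X \<in> sets borel \<Longrightarrow> Rw ` (X :: (real^'n) set) \<in> sets borel"
proof -
  assume "X \<in> sets borel"
  then have "Rv -` X \<inter> space borel \<in> sets borel" by (rule measurable_sets[OF Rv_meas])
  then show ?thesis by (simp add: Rw_image_eq)
qed

lemma emeasure_Rw: "X \<in> sets borel \<Longrightarrow> emeasure lborel (Rw ` (X :: (real^'n) set)) = emeasure lborel X"
proof -
  assume X: "X \<in> sets borel"
  have "emeasure lborel X = emeasure (distr lborel borel Rv) X" by (simp only: distr_Rv)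
  also have "\<dots> = emeasure lborel (Rv -` X \<inter> space lborel)"
    by (rule emeasure_distr) (use Rv_meas X in auto)
  finally show ?thesis by (simp add: Rw_image_eq)
qed

lemma measure_Rw: "X \<in> sets borel \<Longrightarrow> measure lborel (Rw ` (X :: (real^'n) set)) = measure lborel X"
  by (simp add: measure_def emeasure_Rw)

lemma measure_lebesgue_borel: "X \<in> sets borel \<Longrightarrow> measure lebesgue X = measure lborel X"
  by (simp add: measure_completion)

lemma emeasure_lebesgue_borel: "X \<in> sets borel \<Longrightarrow> emeasure lebesgue X = emeasure lborel X"
  by simp

lemma measure_linear_image_gen:
  fixes f :: "real^'n \<Rightarrow> real^'n"
  assumes f: "linear f" and X: "X \<in> sets borel" "emeasure lborel X < \<infinity>" and fX: "f ` X \<in> sets borel"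
  shows "measure lebesgue (f ` X) = \<bar>det (matrix (Rw \<circ> f \<circ> Rv))\<bar> * measure lebesgue X"
proof -
  define f' where "f' = Rw \<circ> f \<circ> Rv"
  have lf': "linear f'" unfolding f'_def
    by (intro linear_compose[OF linear_Rv] linear_compose[OF f] linear_Rw)
  define Y where "Y = Rw ` X"
  have Yb: "Y \<in> sets borel" unfolding Y_def by (rule Rw_image_borel[OF X(1)])
  have Yl: "Y \<in> lmeasurable"
  proof (rule fmeasurableI)
    show "Y \<in> sets lebesgue" using Yb by auto
    show "emeasure lebesgue Y < \<infinity>"
      using Yb X by (simp add: emeasure_lebesgue_borel Y_def emeasure_Rw)
  qed
  have img: "f' ` Y = Rw ` (f ` X)"
    by (auto simp: f'_def Y_def image_iff)
  have "measure lebesgue (f ` X) = measure lborel (Rw ` (f ` X))"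
    using fX by (simp add: measure_lebesgue_borel measure_Rw)
  also have "\<dots> = measure lebesgue (f' ` Y)"
    using Rw_image_borel[OF fX] by (simp add: img measure_lebesgue_borel)
  also have "\<dots> = \<bar>det (matrix f')\<bar> * measure lebesgue Y"
    by (rule measure_linear_image[OF lf' Yl])
  also have "measure lebesgue Y = measure lebesgue X"
    using Yb X by (simp add: measure_lebesgue_borel Y_def measure_Rw)
  finally show ?thesis unfolding f'_def .
qed




definition Bf :: "real^'n^'n \<Rightarrow> real^'n \<Rightarrow> real^'n \<Rightarrow> real" where
  "Bf A x y = x \<bullet> (A *v y)"

lemma Bf_linear2: "linear (\<lambda>y. Bf A x y)"
proof -
  have "linear ((\<lambda>z. x \<bullet> z) \<circ> (\<lambda>y. A *v y))"
    by (intro linear_compose matrix_vector_mul_linear bounded_linear.linear[OF bounded_linear_inner_right])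
  then show ?thesis unfolding Bf_def o_def .
qed

lemma Bf_sym: "transpose A = A \<Longrightarrow> Bf A x y = Bf A y x"
  unfolding Bf_def by (metis dot_lmul_matrix inner_commute transpose_transpose vector_transpose_matrix)

lemma Bf_linear1: "transpose A = A \<Longrightarrow> linear (\<lambda>x. Bf A x y)"
  using Bf_linear2[of A y] by (simp add: Bf_sym)

lemma Bf_sum2: "Bf A x (\<Sum>i\<in>I. f i) = (\<Sum>i\<in>I. Bf A x (f i))"
  using linear_sum[OF Bf_linear2] by blast

lemma Bf_scale2: "Bf A x (c *\<^sub>R y) = c * Bf A x y"
  using linear_scale[OF Bf_linear2[of A x], of c y] by simp

lemma Bf_diff2: "Bf A x (y - z) = Bf A x y - Bf A x z"
  by (rule linear_diff[OF Bf_linear2])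

lemma GS_exists:
  fixes A :: "real^'n^'n"
  assumes sym: "transpose A = A" and pd: "\<And>x. x \<noteq> 0 \<Longrightarrow> Bf A x x > 0"
  shows "finite T \<Longrightarrow> \<exists>U. finite U \<and> 0 \<notin> U \<and> (\<forall>x\<in>U. \<forall>y\<in>U. x \<noteq> y \<longrightarrow> Bf A x y = 0) \<and> span U = span T"
proof (induction T rule: finite_induct)
  case empty
  then show ?case by (intro exI[of _ "{}"]) auto
next
  case (insert a T)
  then obtain U where U: "finite U" "0 \<notin> U" "\<forall>x\<in>U. \<forall>y\<in>U. x \<noteq> y \<longrightarrow> Bf A x y = 0" "span U = span T"
    by blast
  define a' where "a' = a - (\<Sum>b\<in>U. (Bf A b a / Bf A b b) *\<^sub>R b)"
  have orth: "Bf A c a' = 0" if c: "c \<in> U" for c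
  proof -
    have "Bf A c (\<Sum>b\<in>U. (Bf A b a / Bf A b b) *\<^sub>R b) = (\<Sum>b\<in>U. (Bf A b a / Bf A b b) * Bf A c b)"
      by (simp add: Bf_sum2 Bf_scale2)
    also have "\<dots> = (\<Sum>b\<in>U. if b = c then Bf A c a else 0)"
    proof (rule sum.cong[OF refl])
      fix b assume b: "b \<in> U"
      show "Bf A b a / Bf A b b * Bf A c b = (if b = c then Bf A c a else 0)"
      proof (cases "b = c")
        case True
        have "Bf A c c > 0" using pd c U(2) by (metis)
        then show ?thesis using True by simp
      next
        case False
        then have "Bf A c b = 0" using U(3) b c by metis
        then show ?thesis using False by simp
      qed
    qed
    also have "\<dots> = Bf A c a" using c U(1) by simp
    finally show ?thesis unfolding a'_def Bf_diff2 by simp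
  qed
  have diff: "a - a' \<in> span U"
    unfolding a'_def by (simp add: span_sum span_mul span_base)
  show ?case
  proof (cases "a' = 0")
    case True
    then have "a \<in> span T" using diff U(4) by simp
    then have "span (insert a T) = span T"
      by (simp add: span_redundant)
    then show ?thesis using U by (intro exI[of _ U]) simp
  next
    case False
    have a'U: "a' \<notin> U"
      using orth[of a'] pd[OF False] by auto
    have "span (insert a' U) = span (insert a U)"
      by (rule eq_span_insert_eq) (use diff span_neg in \<open>simp add: span_neg[of "a - a'" U, simplified]\<close>)
    also have "\<dots> = span (insert a T)"
      using U(4) by (simp add: span_insert)
    finally have sp: "span (insert a' U) = span (insert a T)" .
    show ?thesis
    proof (intro exI[of _ "insert a' U"] conjI)
      show "finite (insert a' U)" using U by simp
      show "0 \<notin> insert a' U" using U False by simp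
      show "\<forall>x\<in>insert a' U. \<forall>y\<in>insert a' U. x \<noteq> y \<longrightarrow> Bf A x y = 0"
        using U(3) orth Bf_sym[OF sym] by auto
    qed (rule sp)
  qed
qed

lemma Bf_scale1: "transpose A = A \<Longrightarrow> Bf A (c *\<^sub>R x) y = c * Bf A x y"
  by (simp add: Bf_sym[of A _ y] Bf_scale2)

lemma Bf_sum1: "transpose A = A \<Longrightarrow> Bf A (\<Sum>i\<in>I. f i) y = (\<Sum>i\<in>I. Bf A (f i) y)"
  by (simp add: Bf_sym[of A _ y] Bf_sum2)

lemma pairwise_Bf_independent:
  fixes A :: "real^'n^'n"
  assumes pd: "\<And>x. x \<noteq> 0 \<Longrightarrow> Bf A x x > 0" and U0: "0 \<notin> U"
    and orth: "\<forall>x\<in>U. \<forall>y\<in>U. x \<noteq> y \<longrightarrow> Bf A x y = 0"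
  shows "independent U"
proof -
  have False if a: "a \<in> U" and sp: "a \<in> span (U - {a})" for a
  proof -
    obtain S u where S: "finite S" "S \<subseteq> U - {a}" "(\<Sum>v\<in>S. u v *\<^sub>R v) = a"
      using sp unfolding span_explicit by blast
    have "Bf A a a = Bf A a (\<Sum>v\<in>S. u v *\<^sub>R v)" using S(3) by simp
    also have "\<dots> = (\<Sum>v\<in>S. u v * Bf A a v)" by (simp add: Bf_sum2 Bf_scale2)
    also have "\<dots> = 0"
    proof (rule sum.neutral, rule ballI)
      fix v assume "v \<in> S"
      then have "v \<in> U" "v \<noteq> a" using S(2) by auto
      then show "u v * Bf A a v = 0" using orth a by simp
    qed
    finally have "Bf A a a = 0" .
    moreover have "a \<noteq> 0" using a U0 by auto
    ultimately show False using pd by fastforce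
  qed
  then show ?thesis by (auto simp: dependent_def)
qed

lemma exists_g:
  fixes A :: "real^'n^'n"
  assumes sym: "transpose A = A" and pd: "\<And>x. x \<noteq> 0 \<Longrightarrow> Bf A x x > 0"
  shows "\<exists>g :: real^'n \<Rightarrow> real^'n. linear g \<and> bij g \<and> (\<forall>z. Bf A (g z) (g z) = z \<bullet> z)"
proof -
  obtain U where U: "finite U" "0 \<notin> U" "\<forall>x\<in>U. \<forall>y\<in>U. x \<noteq> y \<longrightarrow> Bf A x y = 0" "span U = span Basis"
    using GS_exists[OF sym pd finite_Basis] by blast
  have ind: "independent U" by (rule pairwise_Bf_independent[OF pd U(2) U(3)])
  have "card U = dim (UNIV :: (real^'n) set)"
    by (rule basis_card_eq_dim) (use U(4) ind in auto)
  then have cU: "card U = CARD('n)" by simp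
  obtain e where e: "bij_betw e (UNIV :: 'n set) U"
    using finite_same_card_bij[of "UNIV :: 'n set" U] U(1) cU by auto
  have eU: "e i \<in> U" for i using e by (auto simp: bij_betw_def)
  have e0: "e i \<noteq> 0" for i using eU U(2) by metis
  have einj: "e i = e j \<Longrightarrow> i = j" for i j using e by (auto simp: bij_betw_def inj_on_def)
  define b where "b i = (1 / sqrt (Bf A (e i) (e i))) *\<^sub>R e i" for i
  have bb: "Bf A (b i) (b j) = (if i = j then 1 else 0)" for i j
  proof (cases "i = j")
    case True
    have p: "Bf A (e i) (e i) > 0" using pd e0 by blast
    have "Bf A (b i) (b i) = (1 / sqrt (Bf A (e i) (e i))) * (1 / sqrt (Bf A (e i) (e i))) * Bf A (e i) (e i)"
      unfolding b_def by (simp add: Bf_scale1[OF sym] Bf_scale2)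
    also have "\<dots> = 1" using p
      by (simp add: field_simps)
    finally show ?thesis using True by simp
  next
    case False
    then have "e i \<noteq> e j" using einj by blast
    then have "Bf A (e i) (e j) = 0" using U(3) eU by blast
    then show ?thesis using False unfolding b_def by (simp add: Bf_scale1[OF sym] Bf_scale2)
  qed
  define g where "g z = (\<Sum>i\<in>UNIV. (z$i) *\<^sub>R b i)" for z :: "real^'n"
  have lg: "linear g"
    unfolding linear_iff g_def
    by (simp add: scaleR_add_left sum.distrib scaleR_sum_right)
  have gg: "Bf A (g z) (g z) = z \<bullet> z" for z
  proof -
    have "Bf A (g z) (g z) = (\<Sum>i\<in>UNIV. z$i * (\<Sum>j\<in>UNIV. z$j * Bf A (b j) (b i)))"
      unfolding g_def by (simp add: Bf_sum1[OF sym] Bf_sum2 Bf_scale1[OF sym] Bf_scale2)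
    also have "\<dots> = (\<Sum>i\<in>UNIV. z$i * z$i)"
      by (simp add: bb if_distrib[of "\<lambda>x. _ * x"] cong: if_cong)
    finally show ?thesis by (simp add: inner_vec_def)
  qed
  have ig: "inj g"
  proof (rule injI)
    fix x y assume "g x = g y"
    then have "g (x - y) = 0" using linear_diff[OF lg] by simp
    then have "(x - y) \<bullet> (x - y) = 0" using gg[of "x - y"] by (simp add: Bf_def)
    then show "x = y" by simp
  qed
  have "surj g" by (rule linear_inj_imp_surj[OF lg ig])
  then show ?thesis using lg ig gg by (auto simp: bij_def)
qed




lemma emeasure_UN_countable_le:
  assumes I: "countable I" and sets: "\<And>i. i \<in> I \<Longrightarrow> X i \<in> sets M"
  shows "emeasure M (\<Union>(X ` I)) \<le> (\<integral>\<^sup>+i. emeasure M (X i) \<partial>count_space I)"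
proof -
  have meas[measurable]: "\<Union>(X ` I) \<in> sets M"
    using sets I by (intro sets.countable_UN') auto
  have le: "indicator (\<Union>(X ` I)) x \<le> (\<integral>\<^sup>+ i. indicator (X i) x \<partial>count_space I)" for x
  proof (cases "x \<in> \<Union>(X ` I)")
    case True
    then obtain j where j: "j \<in> I" "x \<in> X j" by auto
    have "(\<integral>\<^sup>+ i. indicator {j} i \<partial>count_space I) = emeasure (count_space I) {j}"
      using j by (intro nn_integral_indicator) auto
    also have "\<dots> = 1" using j by (simp add: emeasure_count_space_finite)
    moreover have "(\<integral>\<^sup>+ i. indicator {j} i \<partial>count_space I) \<le> (\<integral>\<^sup>+ i. (indicator (X i) x :: ennreal) \<partial>count_space I)"
      by (rule nn_integral_mono) (auto simp: j(2) split: split_indicator)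
    ultimately have "1 \<le> (\<integral>\<^sup>+ i. (indicator (X i) x :: ennreal) \<partial>count_space I)"
      by simp
    then show ?thesis using True by simp
  qed simp
  have "emeasure M (\<Union>(X ` I)) = (\<integral>\<^sup>+x. indicator (\<Union>(X ` I)) x \<partial>M)"
    by simp
  also have "\<dots> \<le> (\<integral>\<^sup>+x. \<integral>\<^sup>+ i. indicator (X i) x \<partial>count_space I \<partial>M)"
    by (rule nn_integral_mono) (rule le)
  also have "\<dots> = (\<integral>\<^sup>+i. \<integral>\<^sup>+x. indicator (X i) x \<partial>M \<partial>count_space I)"
    by (rule nn_integral_count_space_nn_integral[OF I]) (use sets in auto)
  also have "\<dots> = (\<integral>\<^sup>+i. emeasure M (X i) \<partial>count_space I)"
    by (rule nn_integral_cong) (use sets in auto)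
  finally show ?thesis .
qed

lemma emeasure_lebesgue_cball_eq:
  fixes a b :: "'a::euclidean_space"
  shows "emeasure lebesgue (cball a r) = emeasure lebesgue (cball b r)"
proof -
  have "emeasure lebesgue (cball a r) = emeasure lborel (cball a r)"
    by (simp add: emeasure_completion)
  also have "\<dots> = emeasure lborel (cball b r)"
  proof (cases "r \<ge> 0")
    case True then show ?thesis by (simp add: emeasure_cball)
  next
    case False then show ?thesis by simp
  qed
  also have "\<dots> = emeasure lebesgue (cball b r)" by (simp add: emeasure_completion)
  finally show ?thesis .
qed

lemma lipschitz_measure_le:
  fixes H :: "'a::euclidean_space \<Rightarrow> 'a"
  assumes W: "W \<in> lmeasurable"
    and lip: "\<And>x y. x \<in> W \<Longrightarrow> y \<in> W \<Longrightarrow> dist (H x) (H y) \<le> dist x y"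
    and T: "T \<in> lmeasurable" "T \<subseteq> H ` W"
  shows "measure lebesgue T \<le> measure lebesgue W"
proof (rule field_le_epsilon)
  fix e :: real assume e: "e > 0"
  obtain U where U: "open U" "W \<subseteq> U" "(U - W) \<in> lmeasurable" "emeasure lebesgue (U - W) < ennreal e"
    using sets_lebesgue_outer_open[OF fmeasurableD[OF W] e] by blast
  define K where "K = {(x, r). x \<in> W \<and> 0 < r \<and> cball x r \<subseteq> U}"
  have cov: "\<exists>i. i \<in> K \<and> x \<in> cball (fst i) (snd i) \<and> snd i < d" if x: "x \<in> W" "0 < d" for x d
  proof -
    obtain r where r: "r > 0" "ball x r \<subseteq> U" using U(1,2) x open_contains_ball by blast
    define s where "s = min (d/2) (r/2)"
    have "s > 0" "s < d" "s < r" using r x unfolding s_def by auto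
    have "cball x s \<subseteq> ball x r" using \<open>s < r\<close> by (simp add: cball_subset_ball_iff)
    then have "cball x s \<subseteq> U" using r(2) by (rule order.trans)
    then have "(x, s) \<in> K" using \<open>s > 0\<close> x unfolding K_def by blast
    then show ?thesis using \<open>s < d\<close> \<open>s > 0\<close> by (intro exI[of _ "(x, s)"]) simp
  qed
  have Kpos: "\<And>i. i \<in> K \<Longrightarrow> 0 < snd i" by (auto simp: K_def)
  obtain C where C: "countable C" "C \<subseteq> K"
     and disj: "pairwise (\<lambda>i j. disjnt (cball (fst i) (snd i)) (cball (fst j) (snd j))) C"
     and neg: "negligible (W - (\<Union>i \<in> C. cball (fst i) (snd i)))"
    by (rule Vitali_covering_theorem_cballs[of K snd W fst, OF Kpos cov])
  define D where "D i = cball (fst i) (snd i)" for i :: "'a \<times> real"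
  define E where "E i = cball (H (fst i)) (snd i)" for i :: "'a \<times> real"
  define N where "N = W - (\<Union>i \<in> C. D i)"
  have negN: "negligible N" using neg unfolding N_def D_def .
  have negHN: "negligible (H ` N)"
  proof (rule negligible_locally_Lipschitz_image[OF order_refl negN])
    fix x assume "x \<in> N"
    then have xW: "x \<in> W" by (simp add: N_def)
    show "\<exists>T B. open T \<and> x \<in> T \<and> (\<forall>y\<in>N \<inter> T. norm (H y - H x) \<le> B * norm (y - x))"
      using lip xW by (intro exI[of _ UNIV] exI[of _ 1]) (auto simp: N_def dist_norm)
  qed
  have Tsub: "T \<subseteq> (\<Union>i\<in>C. E i) \<union> H ` N"
  proof
    fix y assume "y \<in> T"
    then obtain x where x: "x \<in> W" "y = H x" using T(2) by blast
    show "y \<in> (\<Union>i\<in>C. E i) \<union> H ` N"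
    proof (cases "x \<in> (\<Union>i \<in> C. D i)")
      case True
      then obtain i where i: "i \<in> C" "x \<in> D i" by blast
      then have "fst i \<in> W" using C(2) by (auto simp: K_def)
      then have "dist (H (fst i)) (H x) \<le> dist (fst i) x" using lip x(1) by blast
      also have "\<dots> \<le> snd i" using i(2) by (simp add: D_def)
      finally have "y \<in> E i" using x by (simp add: E_def)
      then show ?thesis using i by blast
    next
      case False
      then show ?thesis using x by (auto simp: N_def)
    qed
  qed
  have Esets: "E i \<in> sets lebesgue" "D i \<in> sets lebesgue" for i by (auto simp: E_def D_def)
  have HNnull: "H ` N \<in> null_sets lebesgue" using negHN negligible_iff_null_sets by blast
  have UEsets: "(\<Union>i\<in>C. E i) \<in> sets lebesgue" using C(1) Esets by (intro sets.countable_UN') auto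
  have "emeasure lebesgue T \<le> emeasure lebesgue ((\<Union>i\<in>C. E i) \<union> H ` N)"
    by (rule emeasure_mono[OF Tsub]) (use UEsets HNnull in auto)
  also have "\<dots> \<le> emeasure lebesgue (\<Union>i\<in>C. E i) + emeasure lebesgue (H ` N)"
    by (rule emeasure_subadditive) (use UEsets HNnull in auto)
  also have "emeasure lebesgue (H ` N) = 0" using HNnull by auto
  also have "emeasure lebesgue (\<Union>i\<in>C. E i) \<le> (\<integral>\<^sup>+i. emeasure lebesgue (E i) \<partial>count_space C)"
    by (rule emeasure_UN_countable_le[OF C(1)]) (use Esets in auto)
  also have "\<dots> = (\<integral>\<^sup>+i. emeasure lebesgue (D i) \<partial>count_space C)"
    by (rule nn_integral_cong) (simp only: E_def D_def emeasure_lebesgue_cball_eq[of "H _" _ "fst _"])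
  also have "\<dots> = emeasure lebesgue (\<Union>i\<in>C. D i)"
  proof (rule emeasure_UN_countable[symmetric, OF _ C(1)])
    show "disjoint_family_on D C"
      using disj unfolding disjoint_family_on_def pairwise_def disjnt_def D_def by blast
  qed (use Esets in auto)
  also have "\<dots> \<le> emeasure lebesgue U"
  proof (rule emeasure_mono)
    show "(\<Union>i\<in>C. D i) \<subseteq> U"
    proof
      fix y assume "y \<in> (\<Union>i\<in>C. D i)"
      then obtain i where "i \<in> C" "y \<in> D i" by blast
      moreover have "D i \<subseteq> U" using \<open>i \<in> C\<close> C(2) unfolding K_def D_def by (cases i) auto
      ultimately show "y \<in> U" by blast
    qed
    show "U \<in> sets lebesgue" using U(1) by auto
  qed
  also have "U = W \<union> (U - W)" using U(2) by auto
  also have "emeasure lebesgue (W \<union> (U - W)) = emeasure lebesgue W + emeasure lebesgue (U - W)"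
    by (rule plus_emeasure[symmetric]) (use W U(3) in auto)
  also have "\<dots> \<le> ennreal (measure lebesgue W) + ennreal e"
    using U(4) W by (intro add_mono) (auto simp: emeasure_eq_measure2 less_imp_le)
  also have "ennreal (measure lebesgue W) + ennreal e = ennreal (measure lebesgue W + e)"
    using e by (simp add: ennreal_plus)
  finally have "ennreal (measure lebesgue T) \<le> ennreal (measure lebesgue W + e)"
    using T(1) by (simp add: emeasure_eq_measure2)
  then show "measure lebesgue T \<le> measure lebesgue W + e"
    using e by (subst (asm) ennreal_le_iff) (auto intro: add_nonneg_nonneg)
qed




locale core =
  fixes \<phi> :: "'a::euclidean_space \<Rightarrow> real" and n t :: real and a :: 'a
  assumes cvx: "convex_on UNIV \<phi>" and n1: "n \<ge> 1" and tpos: "t > 0"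
    and a0: "\<phi> a = 0" and an: "norm a \<le> n"
    and sub: "\<And>z. \<phi> z \<le> t \<Longrightarrow> norm z \<le> n"
begin

definition kk :: real where "kk = t / (8 * n\<^sup>2)"
definition rr :: real where "rr = t / (6 * n)"

definition Good :: "'a \<Rightarrow> 'a \<Rightarrow> bool" where
  "Good z0 p \<longleftrightarrow> norm z0 \<le> 2*n \<and> norm (p - (2*kk) *\<^sub>R z0) \<le> rr \<and>
     (\<forall>z. norm z \<le> 2*n \<longrightarrow> \<phi> z - \<phi> z0 \<ge> kk * (norm (z - z0))\<^sup>2 + p \<bullet> (z - z0))"

lemma kk_pos: "kk > 0" using tpos n1 by (simp add: kk_def)
lemma rr_pos: "rr > 0" using tpos n1 by (simp add: rr_def)

lemma cont: "continuous_on UNIV \<phi>"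
  by (rule convex_on_continuous[OF open_UNIV cvx])

lemma sq_identity: "(norm (z - z0))\<^sup>2 + 2 * (z0 \<bullet> (z - z0)) = (norm z)\<^sup>2 - (norm z0)\<^sup>2"
  by (simp add: power2_norm_eq_inner inner_diff_left inner_diff_right inner_commute)

lemma Good_le_t:
  assumes G: "Good z0 p" shows "\<phi> z0 \<le> t"
proof -
  define pt where "pt = p - (2*kk) *\<^sub>R z0"
  have z0: "norm z0 \<le> 2*n" and ptr: "norm pt \<le> rr" using G by (auto simp: Good_def pt_def)
  have "norm a \<le> 2*n" using an n1 by simp
  then have "\<phi> a - \<phi> z0 \<ge> kk * (norm (a - z0))\<^sup>2 + p \<bullet> (a - z0)"
    using G by (auto simp: Good_def)
  also have "p \<bullet> (a - z0) = pt \<bullet> (a - z0) + kk * (2 * (z0 \<bullet> (a - z0)))"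
    by (simp add: pt_def inner_diff_left)
  finally have "\<phi> z0 \<le> - kk * ((norm (a - z0))\<^sup>2 + 2 * (z0 \<bullet> (a - z0))) - pt \<bullet> (a - z0)"
    using a0 by (simp add: algebra_simps)
  also have "\<dots> = kk * ((norm z0)\<^sup>2 - (norm a)\<^sup>2) - pt \<bullet> (a - z0)"
    by (subst sq_identity) (simp add: algebra_simps)
  also have "\<dots> \<le> kk * (2*n)\<^sup>2 + rr * (3*n)"
  proof -
    have "(norm z0)\<^sup>2 - (norm a)\<^sup>2 \<le> (2*n)\<^sup>2"
      using z0 by (smt (verit) norm_ge_zero power_mono zero_le_power2)
    then have h1: "kk * ((norm z0)\<^sup>2 - (norm a)\<^sup>2) \<le> kk * (2 * n)\<^sup>2"
      using kk_pos by (simp add: mult_left_mono)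
    have "norm (a - z0) \<le> 3*n" using an z0 norm_triangle_ineq4[of a z0] by linarith
    have "- (pt \<bullet> (a - z0)) \<le> norm pt * norm (a - z0)"
      using norm_cauchy_schwarz[of "-pt" "a - z0"] by simp
    also have "\<dots> \<le> rr * (3*n)"
      using ptr \<open>norm (a - z0) \<le> 3*n\<close> rr_pos by (intro mult_mono) auto
    finally show ?thesis using h1 by linarith
  qed
  also have "\<dots> = t" using n1 by (simp add: kk_def rr_def power2_eq_square field_simps)
  finally show ?thesis .
qed

lemma Good_norm: "Good z0 p \<Longrightarrow> norm z0 \<le> n"
  using Good_le_t sub by blast

lemma Good_global:
  assumes G: "Good z0 p"
  shows "\<phi> z - \<phi> z0 - p \<bullet> (z - z0) \<ge>
           (if norm (z - z0) \<le> n then kk * (norm (z - z0))\<^sup>2 else kk * n * norm (z - z0))"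
proof (cases "norm (z - z0) \<le> n")
  case True
  have "norm z0 \<le> n" using Good_norm[OF G] .
  then have "norm z \<le> 2*n" using True norm_triangle_ineq[of z0 "z - z0"] by simp
  then have "\<phi> z - \<phi> z0 \<ge> kk * (norm (z - z0))\<^sup>2 + p \<bullet> (z - z0)" using G by (auto simp: Good_def)
  then show ?thesis using True by simp
next
  case False
  define s where "s = norm (z - z0)"
  define l where "l = n / s"
  have s: "s > n" using False by (simp add: s_def)
  have l: "0 < l" "l < 1" using s n1 by (auto simp: l_def field_simps)
  define z' where "z' = (1 - l) *\<^sub>R z0 + l *\<^sub>R z"
  have z'z0: "z' - z0 = l *\<^sub>R (z - z0)" by (simp add: z'_def algebra_simps)
  have "z \<noteq> z0" using s n1 by (auto simp: s_def)
  then have nz': "norm (z' - z0) = n" using l s n1 by (simp add: z'z0 l_def s_def)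
  have "norm z0 \<le> n" using Good_norm[OF G] .
  then have "norm z' \<le> 2*n" using nz' norm_triangle_ineq[of z0 "z' - z0"] by simp
  then have "\<phi> z' - \<phi> z0 \<ge> kk * (norm (z' - z0))\<^sup>2 + p \<bullet> (z' - z0)" using G by (auto simp: Good_def)
  then have i1: "\<phi> z' - \<phi> z0 \<ge> kk * n\<^sup>2 + l * (p \<bullet> (z - z0))" by (simp only: nz') (simp add: z'z0)
  have i2: "\<phi> z' \<le> (1 - l) * \<phi> z0 + l * \<phi> z"
    unfolding z'_def using l by (intro convex_onD[OF cvx]) auto
  have "l * (\<phi> z - \<phi> z0 - p \<bullet> (z - z0)) \<ge> kk * n\<^sup>2" using i1 i2 by (simp add: algebra_simps)
  then have "\<phi> z - \<phi> z0 - p \<bullet> (z - z0) \<ge> kk * n\<^sup>2 / l" using l by (simp add: field_simps)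
  also have "kk * n\<^sup>2 / l = kk * n * s" using s n1 by (simp add: l_def power2_eq_square field_simps)
  finally show ?thesis using False by (simp add: s_def)
qed

lemma Good_global_nonneg:
  assumes "Good z0 p" shows "\<phi> z - \<phi> z0 - p \<bullet> (z - z0) \<ge> 0"
  using Good_global[OF assms, of z] kk_pos n1 by (smt (verit) mult_nonneg_nonneg norm_ge_zero zero_le_power2)

lemma Good_unique:
  assumes G0: "Good z0 p" and G1: "Good z1 p" shows "z0 = z1"
proof -
  have "norm z0 \<le> 2*n" "norm z1 \<le> 2*n" using G0 G1 by (auto simp: Good_def)
  then have a: "\<phi> z1 - \<phi> z0 \<ge> kk * (norm (z1 - z0))\<^sup>2 + p \<bullet> (z1 - z0)"
        and b: "\<phi> z0 - \<phi> z1 \<ge> kk * (norm (z0 - z1))\<^sup>2 + p \<bullet> (z0 - z1)"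
    using G0 G1 by (auto simp: Good_def)
  have "norm (z0 - z1) = norm (z1 - z0)" by (rule norm_minus_commute)
  moreover have "p \<bullet> (z0 - z1) = - (p \<bullet> (z1 - z0))" by (simp add: inner_diff_right)
  ultimately have "2 * kk * (norm (z1 - z0))\<^sup>2 \<le> 0" using a b by simp
  then have "(norm (z1 - z0))\<^sup>2 \<le> 0" using kk_pos by (simp add: mult_le_0_iff)
  then show ?thesis by simp
qed

lemma Good_lip:
  assumes G0: "Good z0 p" and G1: "Good z1 q"
  shows "dist (p - (2*kk) *\<^sub>R z0) (q - (2*kk) *\<^sub>R z1) \<le> dist p q"
proof -
  define u where "u = p - q"
  define w where "w = z0 - z1"
  have "norm z0 \<le> 2*n" "norm z1 \<le> 2*n" using G0 G1 by (auto simp: Good_def)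
  then have a: "\<phi> z1 - \<phi> z0 \<ge> kk * (norm (z1 - z0))\<^sup>2 + p \<bullet> (z1 - z0)"
        and b: "\<phi> z0 - \<phi> z1 \<ge> kk * (norm (z0 - z1))\<^sup>2 + q \<bullet> (z0 - z1)"
    using G0 G1 by (auto simp: Good_def)
  have nw: "norm (z1 - z0) = norm w" "norm (z0 - z1) = norm w" by (simp_all add: w_def norm_minus_commute)
  have "p \<bullet> (z1 - z0) + q \<bullet> (z0 - z1) = - (u \<bullet> w)"
    by (simp add: u_def w_def inner_diff_left inner_diff_right)
  moreover have "kk * (norm w)\<^sup>2 + p \<bullet> (z1 - z0) \<le> \<phi> z1 - \<phi> z0" using a nw by simp
  moreover have "kk * (norm w)\<^sup>2 + q \<bullet> (z0 - z1) \<le> \<phi> z0 - \<phi> z1" using b nw by simp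
  ultimately have uw: "u \<bullet> w \<ge> 2 * kk * (norm w)\<^sup>2" by linarith
  have "(norm (u - (2*kk) *\<^sub>R w))\<^sup>2 = (norm u)\<^sup>2 - 4 * kk * (u \<bullet> w) + 4 * kk\<^sup>2 * (norm w)\<^sup>2"
    unfolding power2_norm_eq_inner by (simp add: inner_diff_left inner_diff_right inner_commute[of w u] power2_eq_square algebra_simps)
  also have "\<dots> \<le> (norm u)\<^sup>2 - 4 * kk * (2 * kk * (norm w)\<^sup>2) + 4 * kk\<^sup>2 * (norm w)\<^sup>2"
    using uw kk_pos by (smt (verit) mult_left_mono)
  also have "\<dots> \<le> (norm u)\<^sup>2" using kk_pos by (simp add: power2_eq_square algebra_simps)
  finally have "norm (u - (2*kk) *\<^sub>R w) \<le> norm u" using power2_le_imp_le by fastforce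
  moreover have "(p - (2*kk) *\<^sub>R z0) - (q - (2*kk) *\<^sub>R z1) = u - (2*kk) *\<^sub>R w"
    by (simp add: u_def w_def algebra_simps)
  ultimately show ?thesis unfolding dist_norm u_def by metis
qed

lemma Good_exists:
  assumes pt: "norm pt \<le> rr"
  shows "\<exists>z0. Good z0 (pt + (2*kk) *\<^sub>R z0)"
proof -
  define F where "F z = \<phi> z - kk * (norm z)\<^sup>2 - pt \<bullet> z" for z
  have cF: "continuous_on (cball 0 (2*n)) F"
    unfolding F_def using cont
    by (intro continuous_intros continuous_on_subset[OF cont]) auto
  obtain z0 where z0: "z0 \<in> cball 0 (2*n)" and mn: "\<And>z. z \<in> cball 0 (2*n) \<Longrightarrow> F z0 \<le> F z"
    using continuous_attains_inf[OF compact_cball _ cF] n1 by fastforce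
  have "Good z0 (pt + (2*kk) *\<^sub>R z0)"
    unfolding Good_def
  proof (intro conjI allI impI)
    show "norm z0 \<le> 2*n" using z0 by simp
    show "norm (pt + (2*kk) *\<^sub>R z0 - (2*kk) *\<^sub>R z0) \<le> rr" using pt by simp
    fix z :: 'a assume "norm z \<le> 2*n"
    then have "F z0 \<le> F z" using mn by simp
    moreover have "kk * (norm (z - z0))\<^sup>2 + (pt + (2*kk) *\<^sub>R z0) \<bullet> (z - z0) =
                   kk * ((norm z)\<^sup>2 - (norm z0)\<^sup>2) + pt \<bullet> (z - z0)"
    proof -
      have "kk * (norm (z - z0))\<^sup>2 + (pt + (2*kk) *\<^sub>R z0) \<bullet> (z - z0) =
            kk * ((norm (z - z0))\<^sup>2 + 2 * (z0 \<bullet> (z - z0))) + pt \<bullet> (z - z0)"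
        by (simp add: inner_add_left algebra_simps)
      then show ?thesis by (simp only: sq_identity)
    qed
    ultimately show "\<phi> z - \<phi> z0 \<ge> kk * (norm (z - z0))\<^sup>2 + (pt + (2*kk) *\<^sub>R z0) \<bullet> (z - z0)"
      by (simp add: F_def inner_diff_right algebra_simps)
  qed
  then show ?thesis by blast
qed

definition Vt :: "'a set" where "Vt = {p. \<exists>z0. Good z0 p}"

lemma Vt_closed: "closed Vt"
proof -
  define Ts :: "('a \<times> 'a) set" where "Ts =
    {x. norm (snd x - (2*kk) *\<^sub>R fst x) \<le> rr} \<inter>
    (\<Inter>z\<in>cball 0 (2*n). {x. kk * (norm (z - fst x))\<^sup>2 + snd x \<bullet> (z - fst x) \<le> \<phi> z - \<phi> (fst x)})"
  have cf: "continuous_on UNIV (\<lambda>x::'a\<times>'a. \<phi> (fst x))"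
    by (rule continuous_on_compose2[OF cont]) (auto intro: continuous_intros)
  have "closed Ts"
    unfolding Ts_def
  proof (intro closed_Int closed_INT ballI)
    show "closed {x :: 'a \<times> 'a. norm (snd x - (2*kk) *\<^sub>R fst x) \<le> rr}"
      by (rule closed_Collect_le) (auto intro!: continuous_intros)
    fix z :: 'a
    show "closed {x :: 'a \<times> 'a. kk * (norm (z - fst x))\<^sup>2 + snd x \<bullet> (z - fst x) \<le> \<phi> z - \<phi> (fst x)}"
      by (rule closed_Collect_le) (auto intro!: continuous_intros cf)
  qed
  then have "closed {y. \<exists>x. x \<in> cball 0 (2*n) \<and> (x, y) \<in> Ts}"
    by (intro closed_compact_projection) auto
  moreover have "{y. \<exists>x. x \<in> cball 0 (2*n) \<and> (x, y) \<in> Ts} = Vt"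
    unfolding Ts_def Vt_def Good_def by auto
  ultimately show ?thesis by simp
qed

lemma Vt_bounded: "bounded Vt"
proof -
  have "Vt \<subseteq> cball 0 (rr + 2*kk*(2*n))"
  proof
    fix p assume "p \<in> Vt"
    then obtain z0 where G: "Good z0 p" by (auto simp: Vt_def)
    then have a: "norm (p - (2*kk) *\<^sub>R z0) \<le> rr" and b: "norm z0 \<le> 2*n" by (auto simp: Good_def)
    have "norm p \<le> norm (p - (2*kk) *\<^sub>R z0) + norm ((2*kk) *\<^sub>R z0)"
      by (metis add.commute diff_add_cancel norm_triangle_ineq)
    also have "norm ((2*kk) *\<^sub>R z0) = 2*kk * norm z0" using kk_pos by simp
    also have "\<dots> \<le> 2*kk*(2*n)" using b kk_pos by (simp add: mult_left_mono)
    finally show "p \<in> cball 0 (rr + 2*kk*(2*n))" using a by simp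
  qed
  then show ?thesis using bounded_cball bounded_subset by blast
qed

lemma Vt_lmeasurable: "Vt \<in> lmeasurable"
  by (rule lmeasurable_compact) (simp add: compact_eq_bounded_closed Vt_closed Vt_bounded)

lemma measure_Vt: "measure lebesgue (cball (0::'a) rr) \<le> measure lebesgue Vt"
proof -
  define Z where "Z p = (SOME z0. Good z0 p)" for p
  define H where "H p = p - (2*kk) *\<^sub>R Z p" for p
  have GZ: "Good (Z p) p" if "p \<in> Vt" for p
    using that unfolding Vt_def Z_def by (auto intro: someI_ex)
  show ?thesis
  proof (rule lipschitz_measure_le[OF Vt_lmeasurable, of H])
    fix x y assume "x \<in> Vt" "y \<in> Vt"
    then show "dist (H x) (H y) \<le> dist x y"
      unfolding H_def using Good_lip GZ by blast
  next
    show "cball 0 rr \<in> lmeasurable" by simp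
    show "cball 0 rr \<subseteq> H ` Vt"
    proof
      fix pt :: 'a assume "pt \<in> cball 0 rr"
      then have "norm pt \<le> rr" by simp
      then obtain z0 where G: "Good z0 (pt + (2*kk) *\<^sub>R z0)" using Good_exists by blast
      define p where "p = pt + (2*kk) *\<^sub>R z0"
      have pV: "p \<in> Vt" using G by (auto simp: Vt_def p_def)
      have "Z p = z0" using Good_unique[OF GZ[OF pV]] G by (simp add: p_def)
      then have "H p = pt" by (simp add: H_def p_def)
      then show "pt \<in> H ` Vt" using pV by (metis image_eqI)
    qed
  qed
qed

lemma conj_bound:
  assumes G: "Good z0 p" and e: "e > 0" "e * m \<le> kk * n" and w: "norm w = m"
  shows "e * (w \<bullet> (z - z0)) - (\<phi> z - \<phi> z0 - p \<bullet> (z - z0)) \<le> e\<^sup>2 * m\<^sup>2 / (4 * kk)"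
proof -
  define s where "s = norm (z - z0)"
  have ws: "w \<bullet> (z - z0) \<le> m * s" using norm_cauchy_schwarz[of w "z - z0"] w by (simp add: s_def)
  have "e * (w \<bullet> (z - z0)) \<le> e * m * s" using ws e(1) by (simp add: mult_left_mono mult.assoc)
  moreover have gb: "\<phi> z - \<phi> z0 - p \<bullet> (z - z0) \<ge> (if s \<le> n then kk * s\<^sup>2 else kk * n * s)"
    using Good_global[OF G, of z] unfolding s_def .
  moreover have "e * m * s - (if s \<le> n then kk * s\<^sup>2 else kk * n * s) \<le> e\<^sup>2 * m\<^sup>2 / (4 * kk)"
  proof (cases "s \<le> n")
    case True
    have "e\<^sup>2 * m\<^sup>2 / (4 * kk) - (e * m * s - kk * s\<^sup>2) = (e * m - 2 * kk * s)\<^sup>2 / (4 * kk)"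
      using kk_pos by (simp add: field_simps power2_eq_square)
    also have "\<dots> \<ge> 0" using kk_pos by simp
    finally show ?thesis using True by simp
  next
    case False
    have "s \<ge> 0" by (simp add: s_def)
    then have "e * m * s \<le> kk * n * s" using e(2) by (simp add: mult_right_mono)
    moreover have "e\<^sup>2 * m\<^sup>2 / (4 * kk) \<ge> 0" using kk_pos by simp
    ultimately show ?thesis using False by simp
  qed
  ultimately show ?thesis by linarith
qed

end




lemma main_lemma:
  fixes \<psi> :: "real^'n \<Rightarrow> real" and x0 :: "real^'n" and t :: real and A :: "real^'n^'n"
  assumes cvx: "convex_on UNIV \<psi>" and px0: "\<psi> x0 = 0" and tpos: "t > 0" and pd: "pos_def_sym A"
    and inS: "{x. normA A x \<le> 1} \<subseteq> sect \<psi> x0 0 t"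
    and Sin: "sect \<psi> x0 0 t \<subseteq> {x. normA A x \<le> real CARD('n)}"
  shows "\<exists>V. V \<subseteq> subdiff_set \<psi> (sect \<psi> x0 0 t) \<and> V \<in> sets lebesgue \<and>
         measure lebesgue V \<ge> ((unit_ball_vol (real CARD('n)))\<^sup>2 / (6 * real CARD('n)) ^ CARD('n)) * t ^ CARD('n) / measure lebesgue (sect \<psi> x0 0 t) \<and>
         subdiff_ereal_set (legendre \<psi>) V \<subseteq> sect \<psi> x0 0 t \<and>
         (\<forall>q\<in>V. \<forall>y0\<in>subdiff_ereal (legendre \<psi>) q.
            \<forall>y. normA A y \<le> 2 * real CARD('n) \<longrightarrow>
              \<psi> y - \<psi> y0 \<ge> t / (8 * (real CARD('n))\<^sup>2) * (normA A (y - y0))\<^sup>2 + q \<bullet> (y - y0))"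
proof -
  define S where "S = sect \<psi> x0 0 t"
  define nn where "nn = real CARD('n)"
  have nn1: "nn \<ge> 1" by (simp add: nn_def)
  have S_eq: "S = {x. \<psi> x \<le> t}" by (simp add: S_def sect_def px0)
  have symA: "transpose A = A" and pdA: "\<And>x. x \<noteq> 0 \<Longrightarrow> Bf A x x > 0"
    using pd by (auto simp: pos_def_sym_def Bf_def)
  obtain g :: "real^'n \<Rightarrow> real^'n" where lg: "linear g" and bg: "bij g" and gg: "\<And>z. Bf A (g z) (g z) = z \<bullet> z"
    using exists_g[OF symA pdA] by blast
  have ng: "normA A (g z) = norm z" for z
    using gg[of z] by (simp add: normA_def Bf_def norm_eq_sqrt_inner)
  define gi where "gi = inv g"
  have g_gi: "g (gi y) = y" for y using bg by (simp add: gi_def bij_def surj_f_inv_f)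
  have gi_g: "gi (g z) = z" for z using bg by (simp add: gi_def bij_def inv_f_f)
  have nA: "normA A y = norm (gi y)" for y using ng[of "gi y"] by (simp add: g_gi)
  have gdiff: "g z - g z' = g (z - z')" for z z' using linear_diff[OF lg] by simp
  have cvxg: "convex_on UNIV (\<lambda>z. \<psi> (g z))"
  proof (rule convex_onI)
    fix u :: real and x y :: "real^'n" assume u: "0 < u" "u < 1"
    have "g ((1 - u) *\<^sub>R x + u *\<^sub>R y) = (1 - u) *\<^sub>R g x + u *\<^sub>R g y"
      using lg by (simp add: linear_add linear_scale)
    then show "\<psi> (g ((1 - u) *\<^sub>R x + u *\<^sub>R y)) \<le> (1 - u) * \<psi> (g x) + u * \<psi> (g y)"
      using convex_onD[OF cvx, of u "g x" "g y"] u by simp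
  qed simp
  have x0S: "\<psi> x0 \<le> t" using px0 tpos by simp
  then have "x0 \<in> S" by (simp add: S_eq)
  then have x0n: "normA A x0 \<le> nn" using Sin by (auto simp: S_def nn_def)
  interpret core "\<lambda>z. \<psi> (g z)" nn t "gi x0"
  proof
    show "convex_on UNIV (\<lambda>z. \<psi> (g z))" by (rule cvxg)
    show "1 \<le> nn" by (rule nn1)
    show "0 < t" by (rule tpos)
    show "\<psi> (g (gi x0)) = 0" by (simp add: g_gi px0)
    show "norm (gi x0) \<le> nn" using x0n nA by simp
    fix z assume "\<psi> (g z) \<le> t"
    then have "g z \<in> S" by (simp add: S_eq)
    then have "normA A (g z) \<le> nn" using Sin by (auto simp: S_def nn_def)
    then show "norm z \<le> nn" by (simp add: ng)
  qed
  define g' where "g' = adjoint g"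
  have lg': "linear g'" unfolding g'_def by (rule adjoint_linear[OF lg])
  have adj: "g' q \<bullet> w = q \<bullet> g w" for q w
    using adjoint_works[OF lg, of w q] by (simp add: g'_def inner_commute)
  have ig': "inj g'"
  proof (rule injI)
    fix p q assume "g' p = g' q"
    then have "(p - q) \<bullet> g w = 0" for w using adj[of p w] adj[of q w] by (simp add: inner_diff_left)
    from this[of "gi (p - q)"] show "p = q" by (simp add: g_gi)
  qed
  have sg': "surj g'" by (rule linear_inj_imp_surj[OF lg' ig'])
  define V where "V = {q. g' q \<in> Vt}"
  have Vgood: "\<exists>z0. Good z0 (g' q)" if "q \<in> V" for q using that by (simp add: V_def Vt_def)
  have inner_g: "q \<bullet> (g z - g z0) = g' q \<bullet> (z - z0)" for q z z0
    by (simp add: gdiff adj)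
  have sub0: "\<psi> y \<ge> \<psi> (g z0) + q \<bullet> (y - g z0)" if G: "Good z0 (g' q)" for z0 q y
  proof -
    have "\<psi> (g (gi y)) - \<psi> (g z0) - g' q \<bullet> (gi y - z0) \<ge> 0" by (rule Good_global_nonneg[OF G])
    then show ?thesis using inner_g[of q "gi y" z0] by (simp add: g_gi)
  qed
  have bnd: "\<psi> y - \<psi> (g z0) \<ge> t / (8 * nn\<^sup>2) * (normA A (y - g z0))\<^sup>2 + q \<bullet> (y - g z0)"
    if G: "Good z0 (g' q)" and y: "normA A y \<le> 2 * nn" for z0 q y
  proof -
    have "norm (gi y) \<le> 2 * nn" using y nA by simp
    then have "\<psi> (g (gi y)) - \<psi> (g z0) \<ge> kk * (norm (gi y - z0))\<^sup>2 + g' q \<bullet> (gi y - z0)"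
      using G by (auto simp: Good_def)
    moreover have "normA A (y - g z0) = norm (gi y - z0)"
      using ng[of "gi y - z0"] gdiff[of "gi y" z0] by (simp add: g_gi)
    ultimately show ?thesis using inner_g[of q "gi y" z0] by (simp add: g_gi kk_def)
  qed
  have leg: "legendre \<psi> q = ereal (q \<bullet> g z0 - \<psi> (g z0))" if G: "Good z0 (g' q)" for z0 q
    unfolding legendre_def
  proof (rule antisym)
    show "(SUP x. ereal (q \<bullet> x - \<psi> x)) \<le> ereal (q \<bullet> g z0 - \<psi> (g z0))"
    proof (rule SUP_least)
      fix x show "ereal (q \<bullet> x - \<psi> x) \<le> ereal (q \<bullet> g z0 - \<psi> (g z0))"
        using sub0[OF G, of x] by (simp add: inner_diff_right)
    qed
    show "ereal (q \<bullet> g z0 - \<psi> (g z0)) \<le> (SUP x. ereal (q \<bullet> x - \<psi> x))"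
      by (rule SUP_upper) simp
  qed
  have uniq: "y1 = g z0" if G: "Good z0 (g' q)" and y1: "y1 \<in> subdiff_ereal (legendre \<psi>) q" for z0 q y1
  proof (rule ccontr)
    assume ne: "y1 \<noteq> g z0"
    define w where "w = gi y1 - z0"
    have yw: "y1 - g z0 = g w" unfolding w_def using gdiff[of "gi y1" z0] by (simp add: g_gi)
    define m where "m = norm w"
    have "w \<noteq> 0" using ne yw linear_0[OF lg] by auto
    then have mpos: "m > 0" by (simp add: m_def)
    obtain d where d: "g' d = w" using sg' by (metis surj_def)
    define e where "e = min (2*kk) (kk*nn/m)"
    have e: "e > 0" "e * m \<le> kk * nn" "e \<le> 2*kk"
      using kk_pos mpos nn1 unfolding e_def by (auto simp: min_def field_simps)
    define L0 where "L0 = q \<bullet> g z0 - \<psi> (g z0)"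
    have upper: "legendre \<psi> (q + e *\<^sub>R d) \<le> ereal (L0 + e * (d \<bullet> g z0) + e\<^sup>2 * m\<^sup>2 / (4 * kk))"
      unfolding legendre_def
    proof (rule SUP_least)
      fix x
      define z where "z = gi x"
      have xz: "x = g z" by (simp add: z_def g_gi)
      have cb: "e * (w \<bullet> (z - z0)) - (\<psi> (g z) - \<psi> (g z0) - g' q \<bullet> (z - z0)) \<le> e\<^sup>2 * m\<^sup>2 / (4 * kk)"
        by (rule conj_bound[OF G e(1) e(2)]) (simp add: m_def)
      have h1: "q \<bullet> x = q \<bullet> g z0 + g' q \<bullet> (z - z0)"
        using inner_g[of q z z0] by (simp add: xz inner_diff_right)
      have h2: "d \<bullet> x = d \<bullet> g z0 + w \<bullet> (z - z0)"
        using inner_g[of d z z0] by (simp add: xz inner_diff_right d)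
      have eq: "(q + e *\<^sub>R d) \<bullet> x - \<psi> x = q \<bullet> x + e * (d \<bullet> x) - \<psi> x"
        by (simp add: inner_add_left)
      have h2e: "e * (d \<bullet> x) = e * (d \<bullet> g z0) + e * (w \<bullet> (z - z0))" using h2 by (simp add: distrib_left)
      have px: "\<psi> (g z) = \<psi> x" by (simp add: xz)
      have le: "q \<bullet> x + e * (d \<bullet> x) - \<psi> x \<le> L0 + e * (d \<bullet> g z0) + e\<^sup>2 * m\<^sup>2 / (4 * kk)"
        using cb h1 h2e px unfolding L0_def by linarith
      show "ereal ((q + e *\<^sub>R d) \<bullet> x - \<psi> x) \<le> ereal (L0 + e * (d \<bullet> g z0) + e\<^sup>2 * m\<^sup>2 / (4 * kk))"
        using eq le         by simp
    qed
    have "legendre \<psi> (q + e *\<^sub>R d) \<ge> legendre \<psi> q + ereal (y1 \<bullet> ((q + e *\<^sub>R d) - q))"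
      using y1 unfolding subdiff_ereal_def by blast
    then have "ereal (L0 + e * (y1 \<bullet> d)) \<le> legendre \<psi> (q + e *\<^sub>R d)"
      using leg[OF G] by (simp add: L0_def)
    then have "ereal (L0 + e * (y1 \<bullet> d)) \<le> ereal (L0 + e * (d \<bullet> g z0) + e\<^sup>2 * m\<^sup>2 / (4 * kk))"
      using upper by (rule order.trans)
    then have ineq: "e * (y1 \<bullet> d - d \<bullet> g z0) \<le> e\<^sup>2 * m\<^sup>2 / (4 * kk)"
      by (simp add: algebra_simps)
    have "y1 \<bullet> d - d \<bullet> g z0 = d \<bullet> g w" using yw by (metis inner_commute inner_diff_right)
    also have "\<dots> = w \<bullet> w" using adj[of d w] d by simp
    also have "\<dots> = m\<^sup>2" by (simp add: m_def power2_norm_eq_inner)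
    finally have "e * m\<^sup>2 \<le> e\<^sup>2 * m\<^sup>2 / (4 * kk)" using ineq by simp
    then have "e * m\<^sup>2 * (4 * kk) \<le> e * m\<^sup>2 * e" using kk_pos by (simp add: field_simps power2_eq_square)
    then have "4 * kk \<le> e" using e(1) mpos by (simp add: mult_le_cancel_left_pos)
    then show False using e(3) kk_pos by simp
  qed
  have ctsg': "continuous_on UNIV g'" using lg' by (simp add: linear_continuous_on linear_conv_bounded_linear)
  have Vt_cpt: "compact Vt" by (simp add: compact_eq_bounded_closed Vt_closed Vt_bounded)
  define hi where "hi = inv g'"
  have lhi: "linear hi" unfolding hi_def by (rule inj_linear_imp_inv_linear[OF lg' ig'])
  have g'_hi: "g' (hi p) = p" for p using sg' by (simp add: hi_def surj_f_inv_f)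
  have hi_g': "hi (g' q) = q" for q using ig' by (simp add: hi_def inv_f_f)
  have V_img: "V = hi ` Vt"
  proof (rule set_eqI)
    fix q show "q \<in> V \<longleftrightarrow> q \<in> hi ` Vt"
    proof
      assume "q \<in> V" then have "g' q \<in> Vt" by (simp add: V_def)
      then show "q \<in> hi ` Vt" using hi_g'[of q] by (metis image_eqI)
    next
      assume "q \<in> hi ` Vt" then obtain p where "p \<in> Vt" "q = hi p" by blast
      then show "q \<in> V" by (simp add: V_def g'_hi)
    qed
  qed
  have V_cpt: "compact V" unfolding V_img
    by (rule compact_continuous_image[OF _ Vt_cpt]) (use lhi in \<open>simp add: linear_continuous_on linear_conv_bounded_linear\<close>)
  have V_borel: "V \<in> sets borel" using V_cpt by (simp add: borel_closed compact_imp_closed)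
  have g'V: "g' ` V = Vt" unfolding V_img by (force simp: g'_hi image_iff)
  have Vt_borel: "Vt \<in> sets borel" by (simp add: borel_closed Vt_closed)
  have measV: "measure lebesgue Vt = \<bar>det (matrix (Rw \<circ> g' \<circ> Rv))\<bar> * measure lebesgue V"
    using measure_linear_image_gen[OF lg' V_borel emeasure_bounded_finite[OF compact_imp_bounded[OF V_cpt]]] g'V Vt_borel
    by simp
  have lG: "linear (Rw \<circ> g \<circ> Rv)"
    by (intro linear_compose[OF linear_Rv] linear_compose[OF lg] linear_Rw)
  have adjG: "adjoint (Rw \<circ> g \<circ> Rv) = Rw \<circ> g' \<circ> Rv"
  proof (rule adjoint_unique, intro allI)
    fix x y :: "real^('n wo)"
    have "(Rw \<circ> g \<circ> Rv) x \<bullet> y = Rw (g (Rv x)) \<bullet> Rw (Rv y)" by simp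
    also have "\<dots> = g (Rv x) \<bullet> Rv y" by (rule inner_Rw)
    also have "\<dots> = Rv x \<bullet> g' (Rv y)" using adj[of "Rv y" "Rv x"] by (simp add: inner_commute)
    also have "\<dots> = Rw (Rv x) \<bullet> Rw (g' (Rv y))" by (rule inner_Rw[symmetric])
    also have "\<dots> = x \<bullet> (Rw \<circ> g' \<circ> Rv) y" by simp
    finally show "(Rw \<circ> g \<circ> Rv) x \<bullet> y = x \<bullet> (Rw \<circ> g' \<circ> Rv) y" .
  qed
  define D where "D = \<bar>det (matrix (Rw \<circ> g \<circ> Rv))\<bar>"
  have detEq: "\<bar>det (matrix (Rw \<circ> g' \<circ> Rv))\<bar> = D"
    unfolding D_def adjG[symmetric] matrix_adjoint[OF lG] by simp
  have cball_meas: "measure lebesgue (cball (0::real^'n) r) = unit_ball_vol nn * r ^ CARD('n)" if "r \<ge> 0" for r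
    using content_cball[OF that, of "0::real^'n"] by (simp add: nn_def)
  define gB where "gB = g ` cball 0 1"
  have gB_cpt: "compact gB" unfolding gB_def
    by (rule compact_continuous_image[OF _ compact_cball]) (use lg in \<open>simp add: linear_continuous_on linear_conv_bounded_linear\<close>)
  have gB_meas: "measure lebesgue gB = D * unit_ball_vol nn"
    using measure_linear_image_gen[OF lg _ emeasure_bounded_finite[OF bounded_cball], of 0 1] gB_cpt cball_meas[of 1]
    by (simp add: gB_def D_def borel_closed compact_imp_closed)
  have gBS: "gB \<subseteq> S"
  proof
    fix y assume "y \<in> gB" then obtain z where "norm z \<le> 1" "y = g z" by (auto simp: gB_def)
    then have "normA A y \<le> 1" by (simp add: ng)
    then show "y \<in> S" using inS by (auto simp: S_def)
  qed
  have ctspsi: "continuous_on UNIV \<psi>" by (rule convex_on_continuous[OF open_UNIV assms(1)])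
  have S_closed: "closed S" unfolding S_eq by (rule closed_Collect_le[OF ctspsi continuous_on_const])
  have S_sub: "S \<subseteq> g ` cball 0 nn"
  proof
    fix x assume "x \<in> S"
    then have "normA A x \<le> nn" using Sin by (auto simp: S_def nn_def)
    then have "gi x \<in> cball 0 nn" by (simp add: nA)
    then show "x \<in> g ` cball 0 nn" using g_gi[of x] by (metis image_eqI)
  qed
  have "compact (g ` cball 0 nn)"
    by (rule compact_continuous_image[OF _ compact_cball]) (use lg in \<open>simp add: linear_continuous_on linear_conv_bounded_linear\<close>)
  then have S_cpt: "compact S" using S_closed S_sub
    by (meson bounded_subset compact_eq_bounded_closed)
  have S_ge: "measure lebesgue S \<ge> D * unit_ball_vol nn"
    using measure_mono_fmeasurable[OF gBS _ lmeasurable_compact[OF S_cpt]] gB_cpt gB_meas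
    by (simp add: lmeasurable_compact fmeasurableD)
  have Vt_ge: "measure lebesgue Vt \<ge> unit_ball_vol nn * rr ^ CARD('n)"
    using measure_Vt cball_meas[of rr] rr_pos by simp
  define om where "om = unit_ball_vol nn"
  have om: "om > 0" using nn1 by (simp add: om_def)
  define mV where "mV = measure lebesgue V"
  define mS where "mS = measure lebesgue S"
  have mV0: "mV \<ge> 0" by (simp add: mV_def)
  have A1: "D * mV \<ge> om * rr ^ CARD('n)" using Vt_ge measV detEq by (simp add: om_def mV_def)
  have rrN: "om * rr ^ CARD('n) > 0" using om rr_pos by simp
  have Dpos: "D > 0"
  proof (rule ccontr)
    assume "\<not> D > 0" then have "D = 0" using D_def by simp
    then show False using A1 rrN by simp
  qed
  have A2: "mS \<ge> D * om" using S_ge by (simp add: om_def mS_def)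
  have mSpos: "mS > 0" using A2 Dpos om by (smt (verit) mult_pos_pos)
  have "mV * mS \<ge> mV * (D * om)" using A2 mV0 by (simp add: mult_left_mono)
  also have "mV * (D * om) = om * (D * mV)" by simp
  also have "\<dots> \<ge> om * (om * rr ^ CARD('n))" using A1 om by (simp add: mult_left_mono)
  finally have prod: "mV * mS \<ge> om\<^sup>2 * rr ^ CARD('n)" by (simp add: power2_eq_square)
  have cval: "(om\<^sup>2 / (6 * nn) ^ CARD('n)) * t ^ CARD('n) = om\<^sup>2 * rr ^ CARD('n)"
    by (simp add: rr_def power_divide)
  have measure_goal: "mV \<ge> (om\<^sup>2 / (6 * nn) ^ CARD('n)) * t ^ CARD('n) / mS"
    unfolding cval using prod mSpos by (simp add: pos_divide_le_eq)
  show ?thesis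
  proof (intro exI[of _ V] conjI)
    show "V \<subseteq> subdiff_set \<psi> (sect \<psi> x0 0 t)"
    proof
      fix q assume "q \<in> V"
      then obtain z0 where G: "Good z0 (g' q)" using Vgood by blast
      have "g z0 \<in> S" using Good_le_t[OF G] by (simp add: S_eq)
      moreover have "q \<in> subdiff \<psi> (g z0)" using sub0[OF G] by (simp add: subdiff_def)
      ultimately show "q \<in> subdiff_set \<psi> (sect \<psi> x0 0 t)" by (auto simp: subdiff_set_def S_def)
    qed
    show "V \<in> sets lebesgue" using V_borel by simp
    show "measure lebesgue V \<ge> ((unit_ball_vol (real CARD('n)))\<^sup>2 / (6 * real CARD('n)) ^ CARD('n)) * t ^ CARD('n) / measure lebesgue (sect \<psi> x0 0 t)"
      using measure_goal by (simp add: om_def mV_def mS_def S_def nn_def)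
    show "subdiff_ereal_set (legendre \<psi>) V \<subseteq> sect \<psi> x0 0 t"
    proof
      fix y assume "y \<in> subdiff_ereal_set (legendre \<psi>) V"
      then obtain q where q: "q \<in> V" "y \<in> subdiff_ereal (legendre \<psi>) q" by (auto simp: subdiff_ereal_set_def)
      then obtain z0 where G: "Good z0 (g' q)" using Vgood by blast
      have "y = g z0" by (rule uniq[OF G q(2)])
      then show "y \<in> sect \<psi> x0 0 t" using Good_le_t[OF G] by (simp add: S_eq S_def[symmetric])
    qed
    show "\<forall>q\<in>V. \<forall>y0\<in>subdiff_ereal (legendre \<psi>) q. \<forall>y. normA A y \<le> 2 * real CARD('n) \<longrightarrow>
              \<psi> y - \<psi> y0 \<ge> t / (8 * (real CARD('n))\<^sup>2) * (normA A (y - y0))\<^sup>2 + q \<bullet> (y - y0)"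
    proof (intro ballI allI impI)
      fix q y0 y assume q: "q \<in> V" and y0: "y0 \<in> subdiff_ereal (legendre \<psi>) q" and y: "normA A y \<le> 2 * real CARD('n)"
      obtain z0 where G: "Good z0 (g' q)" using Vgood q by blast
      have "y0 = g z0" by (rule uniq[OF G y0])
      then show "\<psi> y - \<psi> y0 \<ge> t / (8 * (real CARD('n))\<^sup>2) * (normA A (y - y0))\<^sup>2 + q \<bullet> (y - y0)"
        using bnd[OF G, of y] y by (simp add: nn_def)
    qed
  qed
qed


theorem mainTheorem15:
  "\<exists>c::real. c > 0 \<and>
    (\<forall>(\<psi>::real^'n \<Rightarrow> real) (x0::real^'n) (t::real) (A::real^'n^'n).
      convex_on UNIV \<psi> \<and> \<psi> x0 = 0 \<and> 0 \<in> subdiff \<psi> x0 \<and> t > 0 \<and> pos_def_sym A \<and>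
      {x. normA A x \<le> 1} \<subseteq> sect \<psi> x0 0 t \<and>
      sect \<psi> x0 0 t \<subseteq> {x. normA A x \<le> real CARD('n)}
      \<longrightarrow>
      (\<exists>V. V \<subseteq> subdiff_set \<psi> (sect \<psi> x0 0 t) \<and> V \<in> sets lebesgue \<and>
         measure lebesgue V \<ge> c * t ^ CARD('n) / measure lebesgue (sect \<psi> x0 0 t) \<and>
         subdiff_ereal_set (legendre \<psi>) V \<subseteq> sect \<psi> x0 0 t \<and>
         (\<forall>q\<in>V. \<forall>y0\<in>subdiff_ereal (legendre \<psi>) q.
            \<forall>y. normA A y \<le> 2 * real CARD('n) \<longrightarrow>
              \<psi> y - \<psi> y0 \<ge> t / (8 * (real CARD('n))\<^sup>2) * (normA A (y - y0))\<^sup>2 + q \<bullet> (y - y0))))"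
proof (intro exI[of _ "(unit_ball_vol (real CARD('n)))\<^sup>2 / (6 * real CARD('n)) ^ CARD('n)"] conjI allI impI)
  have "unit_ball_vol (real CARD('n)) > 0" by (rule unit_ball_vol_pos) simp
  then show "0 < (unit_ball_vol (real CARD('n)))\<^sup>2 / (6 * real CARD('n)) ^ CARD('n)"
    by (intro divide_pos_pos zero_less_power) auto
next
  fix \<psi> :: "real^'n \<Rightarrow> real" and x0 :: "real^'n" and t :: real and A :: "real^'n^'n"
  assume H: "convex_on UNIV \<psi> \<and> \<psi> x0 = 0 \<and> 0 \<in> subdiff \<psi> x0 \<and> t > 0 \<and> pos_def_sym A \<and>
      {x. normA A x \<le> 1} \<subseteq> sect \<psi> x0 0 t \<and>
      sect \<psi> x0 0 t \<subseteq> {x. normA A x \<le> real CARD('n)}"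
  show "\<exists>V. V \<subseteq> subdiff_set \<psi> (sect \<psi> x0 0 t) \<and> V \<in> sets lebesgue \<and>
         measure lebesgue V \<ge> (unit_ball_vol (real CARD('n)))\<^sup>2 / (6 * real CARD('n)) ^ CARD('n) * t ^ CARD('n) / measure lebesgue (sect \<psi> x0 0 t) \<and>
         subdiff_ereal_set (legendre \<psi>) V \<subseteq> sect \<psi> x0 0 t \<and>
         (\<forall>q\<in>V. \<forall>y0\<in>subdiff_ereal (legendre \<psi>) q.
            \<forall>y. normA A y \<le> 2 * real CARD('n) \<longrightarrow>
              \<psi> y - \<psi> y0 \<ge> t / (8 * (real CARD('n))\<^sup>2) * (normA A (y - y0))\<^sup>2 + q \<bullet> (y - y0))"
    using main_lemma[of \<psi> x0 t A] H by blast
qed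

end
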